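(* Let $A$ be a primitive axial algebra of Jordan type $\tfrac12$ and let $a,b$ be distinct $\tfrac12$-axes. Assume $N_{a,b}$ is contained in a $3$-dimensional subalgebra $M$ of $A$ having an identity element $\mathbf e$. Then the following are equivalent: (a) $ab=-\tfrac38\mathbf e+\tfrac12a+\tfrac12b$; (b) $a^{\tau(b)}=b^{\tau(a)}$. If they hold, then $|\tau(a)\tau(b)|=3$; if moreover $\operatorname{char}\mathbb F\ne3$, then $\mathbf e$ is the identity element of $N_{a,b}$ (so $N_{a,b}=M$). Furthermore, if in addition $c:=\mathbf e-b$ is a $\tfrac12$-axis, then $N_{a,c}$ is $3$-dimensional and $ac=-\tfrac18\mathbf e+\tfrac12a+\tfrac12c$; when $\operatorname{char}\mathbb F\ne3$ one has $N_{a,c}=N_{a,b}$, while when $\operatorname{char}\mathbb F=3$ one has $N_{a,b}\subsetneq N_{a,c}$.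
   Context: $\mathbb F$ is a field of characteristic $\neq 2$. For a commutative $\mathbb F$-algebra $A$, $a\in A$, $\lambda\in\mathbb F$, put $A_\lambda(a)=\{x: xa=\lambda x\}$. A $\tfrac12$-axis is an idempotent $a$ with $A=A_1(a)\oplus A_0(a)\oplus A_{1/2}(a)$, $A_1(a)=\mathbb F a$, and with $A_+(a)=A_1(a)\oplus A_0(a)$, $A_-(a)=A_{1/2}(a)$ satisfying $A_+A_+\subseteq A_+$, $A_+A_-\subseteq A_-$, $A_-A_-\subseteq A_+$, $A_0(a)A_0(a)\subseteq A_0(a)$. A primitive axial algebra of Jordan type $\tfrac12$ is a commutative algebra generated by $\tfrac12$-axes. The Miyamoto involution $\tau(a)$ acts as $1$ on $A_+(a)$ and $-1$ on $A_-(a)$. $N_{x,y}$ is the subalgebra generated by $x,y$; an identity element of a subalgebra $N$ is $\mathbf 1\in N$ with $\mathbf 1n=n$ for all $n\in N$. *)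

theory Defs
  imports Complex_Main
begin

definition comm_alg :: "('k::field \<Rightarrow> 'a::ab_group_add \<Rightarrow> 'a) \<Rightarrow> ('a \<Rightarrow> 'a \<Rightarrow> 'a) \<Rightarrow> bool" where
  "comm_alg sc mul \<longleftrightarrow> vector_space sc
     \<and> (\<forall>x y. mul x y = mul y x)
     \<and> (\<forall>x y z. mul (x + y) z = mul x z + mul y z)
     \<and> (\<forall>c x y. mul (sc c x) y = sc c (mul x y))"

definition subalg :: "('k::field \<Rightarrow> 'a::ab_group_add \<Rightarrow> 'a) \<Rightarrow> ('a \<Rightarrow> 'a \<Rightarrow> 'a) \<Rightarrow> 'a set \<Rightarrow> bool" where
  "subalg sc mul S \<longleftrightarrow> module.subspace sc S \<and> (\<forall>x\<in>S. \<forall>y\<in>S. mul x y \<in> S)"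

definition gen_alg :: "('k::field \<Rightarrow> 'a::ab_group_add \<Rightarrow> 'a) \<Rightarrow> ('a \<Rightarrow> 'a \<Rightarrow> 'a) \<Rightarrow> 'a set \<Rightarrow> 'a set" where
  "gen_alg sc mul X = \<Inter> {S. subalg sc mul S \<and> X \<subseteq> S}"

definition Nalg :: "('k::field \<Rightarrow> 'a::ab_group_add \<Rightarrow> 'a) \<Rightarrow> ('a \<Rightarrow> 'a \<Rightarrow> 'a) \<Rightarrow> 'a \<Rightarrow> 'a \<Rightarrow> 'a set" where
  "Nalg sc mul x y = gen_alg sc mul {x, y}"

definition eig :: "('k::field \<Rightarrow> 'a::ab_group_add \<Rightarrow> 'a) \<Rightarrow> ('a \<Rightarrow> 'a \<Rightarrow> 'a) \<Rightarrow> 'a \<Rightarrow> 'k \<Rightarrow> 'a set" where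
  "eig sc mul a l = {x. mul x a = sc l x}"

definition Aplus :: "('k::field \<Rightarrow> 'a::ab_group_add \<Rightarrow> 'a) \<Rightarrow> ('a \<Rightarrow> 'a \<Rightarrow> 'a) \<Rightarrow> 'a \<Rightarrow> 'a set" where
  "Aplus sc mul a = {u + v | u v. u \<in> eig sc mul a 1 \<and> v \<in> eig sc mul a 0}"

definition Aminus :: "('k::field \<Rightarrow> 'a::ab_group_add \<Rightarrow> 'a) \<Rightarrow> ('a \<Rightarrow> 'a \<Rightarrow> 'a) \<Rightarrow> 'a \<Rightarrow> 'a set" where
  "Aminus sc mul a = eig sc mul a (1/2)"

definition half_axis :: "('k::field \<Rightarrow> 'a::ab_group_add \<Rightarrow> 'a) \<Rightarrow> ('a \<Rightarrow> 'a \<Rightarrow> 'a) \<Rightarrow> 'a \<Rightarrow> bool" where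
  "half_axis sc mul a \<longleftrightarrow>
     mul a a = a
   \<and> (\<forall>x. \<exists>!(u, v, w). u \<in> eig sc mul a 1 \<and> v \<in> eig sc mul a 0 \<and> w \<in> eig sc mul a (1/2)
            \<and> x = u + v + w)
   \<and> eig sc mul a 1 = module.span sc {a}
   \<and> (\<forall>x\<in>Aplus sc mul a. \<forall>y\<in>Aplus sc mul a. mul x y \<in> Aplus sc mul a)
   \<and> (\<forall>x\<in>Aplus sc mul a. \<forall>y\<in>Aminus sc mul a. mul x y \<in> Aminus sc mul a)
   \<and> (\<forall>x\<in>Aminus sc mul a. \<forall>y\<in>Aminus sc mul a. mul x y \<in> Aplus sc mul a)
   \<and> (\<forall>x\<in>eig sc mul a 0. \<forall>y\<in>eig sc mul a 0. mul x y \<in> eig sc mul a 0)"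

definition primitive_axial_half :: "('k::field \<Rightarrow> 'a::ab_group_add \<Rightarrow> 'a) \<Rightarrow> ('a \<Rightarrow> 'a \<Rightarrow> 'a) \<Rightarrow> bool" where
  "primitive_axial_half sc mul \<longleftrightarrow> comm_alg sc mul
     \<and> (\<exists>X. (\<forall>x\<in>X. half_axis sc mul x) \<and> gen_alg sc mul X = UNIV)"

definition tau :: "('k::field \<Rightarrow> 'a::ab_group_add \<Rightarrow> 'a) \<Rightarrow> ('a \<Rightarrow> 'a \<Rightarrow> 'a) \<Rightarrow> 'a \<Rightarrow> 'a \<Rightarrow> 'a" where
  "tau sc mul a x = (THE y. \<exists>u v. u \<in> Aplus sc mul a \<and> v \<in> Aminus sc mul a \<and> x = u + v \<and> y = u - v)"

definition is_identity_of :: "('a \<Rightarrow> 'a \<Rightarrow> 'a) \<Rightarrow> 'a set \<Rightarrow> 'a \<Rightarrow> bool" where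
  "is_identity_of mul N e \<longleftrightarrow> e \<in> N \<and> (\<forall>n\<in>N. mul e n = n)"

definition has_order :: "('a \<Rightarrow> 'a) \<Rightarrow> nat \<Rightarrow> bool" where
  "has_order f n \<longleftrightarrow> 0 < n \<and> f ^^ n = id \<and> (\<forall>m. 0 < m \<and> m < n \<longrightarrow> f ^^ m \<noteq> id)"

end

theory Submission imports Defs begin

locale calg = vector_space sc for sc :: "'k::field \<Rightarrow> 'a::ab_group_add \<Rightarrow> 'a" +
  fixes mul :: "'a \<Rightarrow> 'a \<Rightarrow> 'a"
  assumes mcomm: "mul x y = mul y x"
    and madd: "mul (x + y) z = mul x z + mul y z"
    and mscale: "mul (sc c x) y = sc c (mul x y)"
    and two: "(2::'k) \<noteq> 0"
begin

lemma madd2: "mul z (x + y) = mul z x + mul z y"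
  by (simp add: madd mcomm[of z])
lemma mscale2: "mul y (sc c x) = sc c (mul y x)"
  by (simp add: mscale mcomm[of y])
lemma mzero[simp]: "mul 0 x = 0" "mul x 0 = 0"
  using mscale[of 0 x x] mscale2[of x 0 x] by simp_all
lemma test: "(8::'k) * (1/2) = 4"
  using two by simp
lemma mminus[simp]: "mul (- x) y = - mul x y" "mul y (- x) = - mul y x"
proof -
  have "mul (- x) y + mul x y = 0" by (simp add: madd[symmetric])
  then show "mul (- x) y = - mul x y" by (simp add: eq_neg_iff_add_eq_0)
  have "mul y (- x) + mul y x = 0" by (simp add: madd2[symmetric])
  then show "mul y (- x) = - mul y x" by (simp add: eq_neg_iff_add_eq_0)
qed
lemma mdiff: "mul (x - y) z = mul x z - mul y z" "mul z (x - y) = mul z x - mul z y"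
  using madd[of x "-y" z] madd2[of z x "-y"] by simp_all


lemma nz: "(2::'k) \<noteq> 0" "(4::'k) \<noteq> 0" "(8::'k) \<noteq> 0" "(16::'k) \<noteq> 0"
proof -
  show "(2::'k) \<noteq> 0" by (rule two)
  have h4: "(2::'k)*2 \<noteq> 0" using two by (simp only: mult_eq_0_iff) simp
  then show "(4::'k) \<noteq> 0" by simp
  have "(2::'k)*2*2 \<noteq> 0" using two h4 by (simp only: mult_eq_0_iff) simp
  then show "(8::'k) \<noteq> 0" by simp
  have "(2::'k)*2*2*2 \<noteq> 0" using two h4 by (simp only: mult_eq_0_iff) simp
  then show "(16::'k) \<noteq> 0" by simp
qed

definition T :: "'a \<Rightarrow> 'a \<Rightarrow> 'a" where
  "T c x = x - sc 8 (mul x c) + sc 8 (mul (mul x c) c)"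

lemma T_minus: "mul q a = sc (1/2) q \<Longrightarrow> T a q = - q"
proof -
  assume h: "mul q a = sc (1/2) q"
  have "T a q = q - sc 8 (sc (1/2) q) + sc 8 (sc (1/2) (sc (1/2) q))"
    by (simp add: T_def h mscale)
  also have "\<dots> = sc (1 - 8*(1/2) + 8*(1/2*(1/2))) q"
    by (simp add: scale_left_distrib scale_left_diff_distrib)
  also have "1 - 8*(1/2) + 8*(1/2*(1/2)) = (-1::'k)" using nz by (simp add: field_simps)
  finally show ?thesis by simp
qed

lemma T_plus1: "mul u a = u \<Longrightarrow> mul v a = 0 \<Longrightarrow> T a (u + v) = u + v"
  by (simp add: T_def madd)

lemma T_add: "T c (x + y) = T c x + T c y"
  by (simp add: T_def madd scale_right_distrib algebra_simps)
lemma T_diff: "T c (x - y) = T c x - T c y"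
  by (simp add: T_def mdiff scale_right_diff_distrib algebra_simps)
lemma T_scale: "T c (sc k x) = sc k (T c x)"
  by (simp add: T_def mscale scale_right_distrib scale_right_diff_distrib mult.commute)
lemma T_zero[simp]: "T c 0 = 0" by (simp add: T_def)
lemma T_0[simp]: "T 0 x = x" by (simp add: T_def)
lemma T_self: "mul a a = a \<Longrightarrow> T a a = a" by (simp add: T_def)

lemma eig_iff: "x \<in> eig sc mul a l \<longleftrightarrow> mul x a = sc l x" by (simp add: eig_def)

lemma ha_decomp:
  assumes "half_axis sc mul a"
  shows "\<exists>u v w. mul u a = u \<and> mul v a = 0 \<and> mul w a = sc (1/2) w \<and> u \<in> span {a} \<and> x = u + v + w"
proof -
  have A: "\<forall>x. \<exists>!(u, v, w). u \<in> eig sc mul a 1 \<and> v \<in> eig sc mul a 0 \<and> w \<in> eig sc mul a (1/2)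
            \<and> x = u + v + w"
    using assms unfolding half_axis_def by (elim conjE) assumption
  have e1: "eig sc mul a 1 = span {a}"
    using assms unfolding half_axis_def by (elim conjE) assumption
  from A[rule_format, of x, THEN ex1_implies_ex] obtain t where
    t: "case t of (u, v, w) \<Rightarrow> u \<in> eig sc mul a 1 \<and> v \<in> eig sc mul a 0 \<and> w \<in> eig sc mul a (1/2)
            \<and> x = u + v + w" by blast
  obtain u v w where tt: "t = (u, v, w)" by (cases t) auto
  from t tt have u: "u \<in> eig sc mul a 1" and "v \<in> eig sc mul a 0" "w \<in> eig sc mul a (1/2)" "x = u + v + w"
    by simp_all
  then have "mul u a = u" "mul v a = 0" "mul w a = sc (1/2) w" "x = u + v + w"
    by (simp_all add: eig_iff)
  moreover have "u \<in> span {a}" using u e1 by simp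
  ultimately show ?thesis by blast
qed

lemma ha_pm:
  assumes "half_axis sc mul a"
  shows "\<exists>p q. p \<in> Aplus sc mul a \<and> q \<in> Aminus sc mul a \<and> x = p + q"
proof -
  obtain u v w where h: "mul u a = u" "mul v a = 0" "mul w a = sc (1/2) w" "x = u + v + w"
    using ha_decomp[OF assms] by blast
  show ?thesis
    apply (rule exI[of _ "u+v"], rule exI[of _ w])
    using h by (auto simp: Aplus_def Aminus_def eig_iff)
qed

lemma T_Aplus: "p \<in> Aplus sc mul a \<Longrightarrow> T a p = p"
  by (auto simp: Aplus_def eig_iff intro!: T_plus1)
lemma T_Aminus: "q \<in> Aminus sc mul a \<Longrightarrow> T a q = - q"
  by (auto simp: Aminus_def eig_iff intro!: T_minus)

lemma tau_eq:
  assumes "half_axis sc mul a"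
  shows "tau sc mul a x = T a x"
  unfolding tau_def
proof (rule the_equality)
  obtain p q where pq: "p \<in> Aplus sc mul a" "q \<in> Aminus sc mul a" "x = p + q"
    using ha_pm[OF assms] by blast
  show "\<exists>u v. u \<in> Aplus sc mul a \<and> v \<in> Aminus sc mul a \<and> x = u + v \<and> T a x = u - v"
    using pq by (auto simp: T_add T_Aplus T_Aminus)
next
  fix y assume "\<exists>u v. u \<in> Aplus sc mul a \<and> v \<in> Aminus sc mul a \<and> x = u + v \<and> y = u - v"
  then show "y = T a x" by (auto simp: T_add T_Aplus T_Aminus)
qed

lemma T_mult:
  assumes ha: "half_axis sc mul a"
  shows "T a (mul x y) = mul (T a x) (T a y)"
proof -
  obtain p q where pq: "p \<in> Aplus sc mul a" "q \<in> Aminus sc mul a" "x = p + q"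
    using ha_pm[OF ha] by blast
  obtain p' q' where pq': "p' \<in> Aplus sc mul a" "q' \<in> Aminus sc mul a" "y = p' + q'"
    using ha_pm[OF ha] by blast
  have f: "\<forall>x\<in>Aplus sc mul a. \<forall>y\<in>Aplus sc mul a. mul x y \<in> Aplus sc mul a"
   "\<forall>x\<in>Aplus sc mul a. \<forall>y\<in>Aminus sc mul a. mul x y \<in> Aminus sc mul a"
   "\<forall>x\<in>Aminus sc mul a. \<forall>y\<in>Aminus sc mul a. mul x y \<in> Aplus sc mul a"
    using ha unfolding half_axis_def by blast+
  have 1: "T a (mul p p') = mul p p'" using f pq pq' by (simp add: T_Aplus)
  have 2: "T a (mul p q') = - mul p q'" using f pq pq' by (simp add: T_Aminus)
  have 3: "T a (mul q p') = - mul q p'" using f pq pq' mcomm[of q p'] by (simp add: T_Aminus)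
  have 4: "T a (mul q q') = mul q q'" using f pq pq' by (simp add: T_Aplus)
  have "T a (mul x y) = T a (mul p p') + T a (mul p q') + T a (mul q p') + T a (mul q q')"
    by (simp add: pq pq' madd madd2 T_add)
  also have "\<dots> = mul (p - q) (p' - q')"
    by (simp add: 1 2 3 4 mdiff)
  also have "p - q = T a x" using pq by (simp add: T_add T_Aplus T_Aminus)
  also have "p' - q' = T a y" using pq' by (simp add: T_add T_Aplus T_Aminus)
  finally show ?thesis .
qed

lemma T_invol:
  assumes ha: "half_axis sc mul a"
  shows "T a (T a x) = x"
proof -
  obtain p q where pq: "p \<in> Aplus sc mul a" "q \<in> Aminus sc mul a" "x = p + q"
    using ha_pm[OF ha] by blast
  then show ?thesis by (simp add: T_add T_diff T_Aplus T_Aminus)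
qed

lemma T_conj:
  assumes hb: "half_axis sc mul b"
  shows "T (T b c) x = T b (T c (T b x))"
proof -
  have "T b (T c (T b x)) = T b (T b x) - sc 8 (T b (mul (T b x) c)) + sc 8 (T b (mul (mul (T b x) c) c))"
    unfolding T_def[of c] by (simp add: T_add T_diff T_scale)
  also have "\<dots> = T (T b c) x"
    unfolding T_def[of "T b c"] by (simp add: T_mult[OF hb] T_invol[OF hb])
  finally show ?thesis by simp
qed

lemma L6:
  assumes ha: "half_axis sc mul a"
  shows "\<exists>l. mul (mul a b) a = sc (1/2) (mul a b) + sc l a"
proof -
  obtain u v w where h: "mul u a = u" "mul v a = 0" "mul w a = sc (1/2) w" "u \<in> span {a}" "b = u + v + w"
    using ha_decomp[OF ha] by blast
  obtain k where k: "u = sc k a" using h(4) by (auto simp: span_singleton)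
  have ab: "mul a b = u + sc (1/2) w" by (simp add: mcomm[of a] h madd)
  have "mul (mul a b) a = u + sc (1/2) (sc (1/2) w)" unfolding ab by (simp add: madd mscale h(1-3))
  also have "\<dots> = sc (k/2) a + sc (1/2) (sc (1/2) w) + sc (k/2) a"
  proof -
    have "sc k a = sc (k/2) a + sc (k/2) a" using two by (simp flip: scale_left_distrib)
    then show ?thesis by (simp add: k algebra_simps)
  qed
  also have "\<dots> = sc (1/2) (mul a b) + sc (k/2) a"
    unfolding ab k by (simp add: scale_right_distrib)
  finally show ?thesis by blast
qed


lemma sc_comb: "c + d = f \<Longrightarrow> sc c x + sc d x = sc f x"
  by (metis scale_left_distrib)

lemma Tab:
  assumes "mul (mul a b) a = sc (1/2) (mul a b) + sc l a"
  shows "T a b = b - sc 4 (mul a b) + sc (8*l) a"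
proof -
  have "T a b = b - sc 8 (mul a b) + sc 8 (sc (1/2) (mul a b) + sc l a)"
    unfolding T_def mcomm[of b a] assms ..
  also have "\<dots> = b - sc 4 (mul a b) + sc (8*l) a"
  proof -
    have "sc 8 (mul a b) = sc 4 (mul a b) + sc 4 (mul a b)" by (simp flip: scale_left_distrib)
    then show ?thesis using two by (simp add: scale_right_distrib)
  qed
  finally show ?thesis .
qed

lemma lin_dep_idem:
  assumes aa: "mul a a = a" and bb: "mul b b = b" and a0: "a \<noteq> 0" and b0: "b \<noteq> 0"
    and ab: "a \<noteq> b" and h: "sc p a = sc q b"
  shows "p = 0 \<and> q = 0"
proof (cases "p = 0")
  case True
  then show ?thesis using h b0 by simp
next
  case False
  define k where "k = q / p"
  have "a = sc (inverse p) (sc p a)" using False by simp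
  also have "\<dots> = sc k b" unfolding h k_def by (simp add: divide_inverse mult.commute)
  finally have ak: "a = sc k b" .
  have "mul a a = sc (k*k) b" unfolding ak by (simp add: mscale mscale2 bb)
  then have "sc (k*k) b = sc k b" using aa ak by simp
  then have "k * k = k" using b0 by simp
  then have "k * (k - 1) = 0" by (simp add: algebra_simps)
  then have "k = 0 \<or> k = 1" by simp
  then show ?thesis using a0 ab ak by auto
qed

lemma nzP:
  assumes P: "mul x y = sc (- (3/8)) e + sc (1/2) x + sc (1/2) y" and ey: "mul e y = y"
    and yy: "mul y y = y" and x0: "x = 0"
  shows "y = 0"
proof -
  have "0 = mul (mul x y) y" using x0 by simp
  also have "\<dots> = sc (- (3/8)) y + sc (1/2) y"
    unfolding P using x0 by (simp add: madd mdiff mscale ey yy)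
  also have "\<dots> = sc (1/8) y" by (rule sc_comb) (use nz in \<open>simp add: field_simps\<close>)
  finally show ?thesis using nz by simp
qed

lemma lam_P:
  assumes P: "mul a b = sc (- (3/8)) e + sc (1/2) a + sc (1/2) b" and ea: "mul e a = a"
    and aa: "mul a a = a" and a0: "a \<noteq> 0" and R: "mul (mul a b) a = sc (1/2) (mul a b) + sc l a"
  shows "l = 1/8"
proof -
  have "mul (mul a b) a = sc (- (3/8)) a + sc (1/2) a + sc (1/2) (mul a b)"
    by (subst (1) P) (simp add: madd mdiff mscale ea aa mcomm[of b a])
  then have "sc l a = sc (- (3/8)) a + sc (1/2) a" using R by (simp add: algebra_simps)
  also have "\<dots> = sc (1/8) a" by (rule sc_comb) (use nz in \<open>simp add: field_simps\<close>)
  finally show ?thesis using a0 by simp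
qed

lemma span2: "x \<in> span {a, b} \<longleftrightarrow> (\<exists>p q. x = sc p a + sc q b)"
proof
  assume "x \<in> span {a, b}"
  then obtain p q where "x - sc p a = sc q b" by (auto simp: span_insert span_singleton)
  then show "\<exists>p q. x = sc p a + sc q b" by (metis diff_eq_eq add.commute)
next
  assume "\<exists>p q. x = sc p a + sc q b"
  then obtain p q where "x = sc p a + sc q b" by blast
  moreover have "a \<in> span {a, b}" "b \<in> span {a, b}" by (simp_all add: span_base)
  ultimately show "x \<in> span {a, b}" by (simp add: span_add span_scale)
qed

lemma span3: "x \<in> span {e, a, b} \<longleftrightarrow> (\<exists>r p q. x = sc r e + sc p a + sc q b)"
proof
  assume "x \<in> span {e, a, b}"
  then obtain r where "x - sc r e \<in> span {a, b}" by (auto simp: span_insert[of e])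
  then obtain p q where "x - sc r e = sc p a + sc q b" by (auto simp: span2)
  then show "\<exists>r p q. x = sc r e + sc p a + sc q b" by (metis diff_eq_eq add.commute add.assoc)
next
  assume "\<exists>r p q. x = sc r e + sc p a + sc q b"
  then obtain r p q where "x = sc r e + sc p a + sc q b" by blast
  moreover have "e \<in> span {e, a, b}" "a \<in> span {e, a, b}" "b \<in> span {e, a, b}" by (simp_all add: span_base)
  ultimately show "x \<in> span {e, a, b}" by (simp add: span_add span_scale)
qed


lemma indep:
  assumes aa: "mul a a = a" and bb: "mul b b = b" and a0: "a \<noteq> 0" and b0: "b \<noteq> 0"
    and ab: "a \<noteq> b" and ea: "mul e a = a" and eb: "mul e b = b"
    and R1: "mul (mul a b) a = sc (1/2) (mul a b) + sc (1/8) a"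
    and R2: "mul (mul a b) b = sc (1/2) (mul a b) + sc (1/8) b"
  shows "e \<notin> span {a, b}" "a \<notin> span {b}"
proof -
  note ld = lin_dep_idem[OF aa bb a0 b0 ab]
  show "a \<notin> span {b}"
  proof
    assume "a \<in> span {b}"
    then obtain k where "a = sc k b" by (auto simp: span_singleton)
    then have "sc 1 a = sc k b" by simp
    then show False using ld[of 1 k] by simp
  qed
  show "e \<notin> span {a, b}"
  proof
    assume "e \<in> span {a, b}"
    then obtain p q where e: "e = sc p a + sc q b" by (auto simp: span2)
    have E1: "sc p a + sc q (mul a b) = a"
      using ea unfolding e by (simp add: madd mscale aa mcomm[of b a])
    have E2: "sc p (mul a b) + sc q b = b"
      using eb unfolding e by (simp add: madd mscale bb)
    have half: "\<And>x. x - sc (1/2) x = sc (1/2) x"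
    proof -
      fix x
      have "sc (1/2) x + sc (1/2) x = sc 1 x" by (rule sc_comb) (use nz in simp)
      then show "x - sc (1/2) x = sc (1/2) x" by (simp add: algebra_simps)
    qed
    show False
    proof (cases "q = 0")
      case True
      then have "sc p a = sc 1 a" using E1 by simp
      then have "p = 1" using a0 scale_cancel_right[of p a 1] by simp
      then have abb: "mul a b = b" using E2 True by simp
      have "b = sc (1/2) b + sc (1/8) a" using R1 abb by (simp add: mcomm[of b a])
      then have "sc (1/8) a = b - sc (1/2) b" by (metis add_diff_cancel_left')
      then have "sc (1/8) a = sc (1/2) b" using half[of b] by simp
      then show False using ld[of "1/8" "1/2"] nz by simp
    next
      case q0: False
      show False
      proof (cases "p = 0")
        case True
        then have "sc q b = sc 1 b" using E2 by simp
        then have "q = 1" using b0 scale_cancel_right[of q b 1] by simp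
        then have aba: "mul a b = a" using E1 True by simp
        have "a = sc (1/2) a + sc (1/8) b" using R2 aba by simp
        then have "sc (1/8) b = a - sc (1/2) a" by (metis add_diff_cancel_left')
        then have "sc (1/2) a = sc (1/8) b" using half[of a] by simp
        then show False using ld[of "1/2" "1/8"] nz by simp
      next
        case p0: False
        have "sc q (mul a b) = sc (1 - p) a" using E1 by (simp add: algebra_simps)
        then have x1: "mul a b = sc ((1 - p) / q) a" using q0
          by (metis (no_types, lifting) divide_inverse_commute mult.commute nonzero_mult_div_cancel_left scale_scale scale_one divide_self_if)
        have "sc p (mul a b) = sc (1 - q) b" using E2 by (simp add: algebra_simps)
        then have x2: "mul a b = sc ((1 - q) / p) b" using p0
          by (metis (no_types, lifting) divide_inverse_commute mult.commute nonzero_mult_div_cancel_left scale_scale scale_one divide_self_if)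
        have "sc ((1 - p) / q) a = sc ((1 - q) / p) b" using x1 x2 by simp
        then have "(1 - p) / q = 0" using ld by blast
        then have "mul a b = 0" using x1 by simp
        then have "sc (1/8) a = 0" using R1 by simp
        then show False using a0 nz by simp
      qed
    qed
  qed
qed

lemma lin3:
  assumes n1: "e \<notin> span {a, b}" and n2: "a \<notin> span {b}" and b0: "b \<noteq> 0"
    and h: "sc x e + sc y a + sc z b = 0"
  shows "x = 0 \<and> y = 0 \<and> z = 0"
proof -
  have x0: "x = 0"
  proof (rule ccontr)
    assume x0: "x \<noteq> 0"
    have "e = sc (inverse x) (sc x e)" using x0 by simp
    also have "sc x e = - (sc y a + sc z b)"
      by (rule iffD2[OF eq_neg_iff_add_eq_0]) (use h in \<open>simp add: add.assoc\<close>)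
    finally have "e = sc (- (inverse x * y)) a + sc (- (inverse x * z)) b" by (simp add: scale_right_distrib scale_right_diff_distrib)
    then have "e \<in> span {a, b}" unfolding span2
      by (intro exI[of _ "- (inverse x * y)"] exI[of _ "- (inverse x * z)"]) simp
    then show False using n1 by simp
  qed
  have y0: "y = 0"
  proof (rule ccontr)
    assume y0: "y \<noteq> 0"
    have "a = sc (inverse y) (sc y a)" using y0 by simp
    also have "sc y a = - sc z b"
      by (rule iffD2[OF eq_neg_iff_add_eq_0]) (use h x0 in simp)
    finally have "a = sc (- (inverse y * z)) b" by simp
    then have "a \<in> span {b}" unfolding span_singleton
      by (rule image_eqI[of _ _ "- (inverse y * z)"]) simp_all
    then show False using n2 by simp
  qed
  show ?thesis using h x0 y0 b0 by simp
qed


lemma solve_coeffs: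
  assumes aa: "mul a a = a" and bb: "mul b b = b" and ea: "mul e a = a" and eb: "mul e b = b"
    and R1: "mul (mul a b) a = sc (1/2) (mul a b) + sc (1/8) a"
    and R2: "mul (mul a b) b = sc (1/2) (mul a b) + sc (1/8) b"
    and n1: "e \<notin> span {a, b}" and n2: "a \<notin> span {b}" and b0: "b \<noteq> 0"
    and AB: "mul a b = sc \<alpha> e + sc \<beta> a + sc \<gamma> b"
  shows "\<alpha> = - (3/8) \<and> \<beta> = 1/2 \<and> \<gamma> = 1/2"
proof -
  have X1: "sc \<alpha> a + sc \<beta> a + sc \<gamma> (sc \<alpha> e + sc \<beta> a + sc \<gamma> b)
      = sc (1/2) (sc \<alpha> e + sc \<beta> a + sc \<gamma> b) + sc (1/8) a"
  proof -
    have "mul (mul a b) a = sc \<alpha> a + sc \<beta> a + sc \<gamma> (mul a b)"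
      by (subst (1) AB) (simp add: madd mscale ea aa mcomm[of b a])
    then show ?thesis using R1 by (simp only: AB)
  qed
  have X2: "sc \<alpha> b + sc \<beta> (sc \<alpha> e + sc \<beta> a + sc \<gamma> b) + sc \<gamma> b
      = sc (1/2) (sc \<alpha> e + sc \<beta> a + sc \<gamma> b) + sc (1/8) b"
  proof -
    have "mul (mul a b) b = sc \<alpha> b + sc \<beta> (mul a b) + sc \<gamma> b"
      by (subst (1) AB) (simp add: madd mscale eb bb)
    then show ?thesis using R2 by (simp only: AB)
  qed
  have "sc (\<gamma>*\<alpha> - \<alpha>/2) e + sc (\<alpha> + \<beta> + \<gamma>*\<beta> - \<beta>/2 - 1/8) a + sc (\<gamma>*\<gamma> - \<gamma>/2) b = 0"
    using X1 by (simp add: algebra_simps)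
  then have s: "\<gamma>*\<alpha> - \<alpha>/2 = 0" "\<alpha> + \<beta> + \<gamma>*\<beta> - \<beta>/2 - 1/8 = 0" "\<gamma>*\<gamma> - \<gamma>/2 = 0"
    using lin3[OF n1 n2 b0] by blast+
  have "sc (\<beta>*\<alpha> - \<alpha>/2) e + sc (\<beta>*\<beta> - \<beta>/2) a + sc (\<alpha> + \<gamma> + \<beta>*\<gamma> - \<gamma>/2 - 1/8) b = 0"
    using X2 by (simp add: algebra_simps)
  then have t: "\<beta>*\<alpha> - \<alpha>/2 = 0" "\<beta>*\<beta> - \<beta>/2 = 0" "\<alpha> + \<gamma> + \<beta>*\<gamma> - \<gamma>/2 - 1/8 = 0"
    using lin3[OF n1 n2 b0] by blast+
  have g: "\<gamma> = 0 \<or> \<gamma> = 1/2"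
  proof -
    have "\<gamma> * (\<gamma> - 1/2) = 0" using s(3) by (simp add: algebra_simps)
    then show ?thesis by simp
  qed
  have bt: "\<beta> = 0 \<or> \<beta> = 1/2"
  proof -
    have "\<beta> * (\<beta> - 1/2) = 0" using t(2) by (simp add: algebra_simps)
    then show ?thesis by simp
  qed
  have g2: "\<gamma> = 1/2"
  proof (rule ccontr)
    assume "\<gamma> \<noteq> 1/2"
    then have "\<gamma> = 0" using g by simp
    then have "\<alpha> = 0" using s(1) nz by simp
    then show False using t(3) \<open>\<gamma> = 0\<close> nz by simp
  qed
  have b2: "\<beta> = 1/2"
  proof (rule ccontr)
    assume "\<beta> \<noteq> 1/2"
    then have "\<beta> = 0" using bt by simp
    then have "\<alpha> = 0" using t(1) nz by simp
    then show False using s(2) \<open>\<beta> = 0\<close> nz by simp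
  qed
  have h32: "(32::'k) \<noteq> 0 \<and> (96::'k) + \<alpha> * 256 = 0" using s(2) g2 b2 nz by (simp add: field_simps)
  then have "(32::'k) * (3 + \<alpha> * 8) = 0" by (simp add: algebra_simps)
  then have "3 + \<alpha> * 8 = 0" using h32 by (simp only: mult_eq_0_iff) simp
  then have "\<alpha> * 8 = - 3" by (metis add.commute eq_neg_iff_add_eq_0)
  then have "\<alpha> = - (3/8)" using nz by (simp add: field_simps)
  then show ?thesis using g2 b2 by simp
qed


lemma half: "x - sc (1/2) x = sc (1/2) x"
proof -
  have "sc (1/2) x + sc (1/2) x = sc 1 x" by (rule sc_comb) (use nz in simp)
  then show "x - sc (1/2) x = sc (1/2) x" by (simp add: algebra_simps)
qed

lemma dim_span_le:
  assumes BV: "B \<subseteq> V" and iB: "independent B" and fB: "finite B" and cB: "card B = dim V"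
    and pos: "0 < card B"
  shows "V \<subseteq> span B"
proof
  fix x assume xV: "x \<in> V"
  show "x \<in> span B"
  proof (rule ccontr)
    assume xn: "x \<notin> span B"
    have ix: "independent (insert x B)" using independent_insertI[OF xn iB] .
    have xB: "x \<notin> B" using xn span_base by blast
    obtain C where C: "insert x B \<subseteq> C" "C \<subseteq> V" "independent C" "V \<subseteq> span C"
      using maximal_independent_subset_extend[of "insert x B" V] ix BV xV by auto
    have cC: "card C = dim V" using basis_card_eq_dim[OF C(2) C(4) C(3)] .
    show False
    proof (cases "finite C")
      case True
      have "card (insert x B) \<le> card C" using card_mono[OF True C(1)] .
      then show False using cC cB fB xB by simp
    next
      case False
      then show False using cC cB pos by simp
    qed
  qed
qed

lemma subalg_iff: "subalg sc mul S \<longleftrightarrow> subspace S \<and> (\<forall>x\<in>S. \<forall>y\<in>S. mul x y \<in> S)"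
  by (simp add: subalg_def)

end

lemma Nalg_mem: "x \<in> Nalg sc mul a b \<longleftrightarrow> (\<forall>S. subalg sc mul S \<and> a \<in> S \<and> b \<in> S \<longrightarrow> x \<in> S)"
  by (auto simp: Nalg_def gen_alg_def)

lemma Nalg_sub: "subalg sc mul S \<Longrightarrow> a \<in> S \<Longrightarrow> b \<in> S \<Longrightarrow> Nalg sc mul a b \<subseteq> S"
  by (auto simp: Nalg_mem)

theorem lemma3p20:
  fixes sc :: "'k::field \<Rightarrow> 'a::ab_group_add \<Rightarrow> 'a"
    and mul :: "'a \<Rightarrow> 'a \<Rightarrow> 'a"
    and a b e :: 'a and M :: "'a set"
  assumes char2: "(2::'k) \<noteq> 0"
    and A: "primitive_axial_half sc mul"
    and ha: "half_axis sc mul a" and hb: "half_axis sc mul b" and ab: "a \<noteq> b"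
    and M: "subalg sc mul M" and dimM: "vector_space.dim sc M = 3"
    and NM: "Nalg sc mul a b \<subseteq> M"
    and e: "is_identity_of mul M e"
  shows "(mul a b = sc (- (3/8)) e + sc (1/2) a + sc (1/2) b
            \<longleftrightarrow> tau sc mul b a = tau sc mul a b)
       \<and> (mul a b = sc (- (3/8)) e + sc (1/2) a + sc (1/2) b \<longrightarrow>
            has_order (tau sc mul a \<circ> tau sc mul b) 3
          \<and> ((3::'k) \<noteq> 0 \<longrightarrow> is_identity_of mul (Nalg sc mul a b) e \<and> Nalg sc mul a b = M)
          \<and> (half_axis sc mul (e - b) \<longrightarrow>
                vector_space.dim sc (Nalg sc mul a (e - b)) = 3
              \<and> mul a (e - b) = sc (- (1/8)) e + sc (1/2) a + sc (1/2) (e - b)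
              \<and> ((3::'k) \<noteq> 0 \<longrightarrow> Nalg sc mul a (e - b) = Nalg sc mul a b)
              \<and> ((3::'k) = 0 \<longrightarrow> Nalg sc mul a b \<subset> Nalg sc mul a (e - b))))"
proof -
  have ca: "comm_alg sc mul" using A unfolding primitive_axial_half_def by blast
  interpret calg sc mul
    using ca char2 unfolding comm_alg_def calg_def calg_axioms_def by blast
  have Msub: "subspace M" and Mmul: "\<And>x y. x \<in> M \<Longrightarrow> y \<in> M \<Longrightarrow> mul x y \<in> M"
    using M by (auto simp: subalg_iff)
  have aN: "a \<in> Nalg sc mul a b" and bN: "b \<in> Nalg sc mul a b" by (auto simp: Nalg_mem)
  have aM: "a \<in> M" and bM: "b \<in> M" using aN bN NM by auto
  have eM: "e \<in> M" and eid: "\<And>n. n \<in> M \<Longrightarrow> mul e n = n" using e by (auto simp: is_identity_of_def)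
  have ea: "mul e a = a" and eb: "mul e b = b" using eid aM bM by auto
  have aa: "mul a a = a" and bb: "mul b b = b" using ha hb by (auto simp: half_axis_def)
  have abM: "mul a b \<in> M" using Mmul aM bM by blast
  have tau_a: "tau sc mul a = T a" and tau_b: "tau sc mul b = T b"
    using tau_eq[OF ha] tau_eq[OF hb] by auto
  obtain l where Rl: "mul (mul a b) a = sc (1/2) (mul a b) + sc l a" using L6[OF ha] by blast
  obtain m where Rm: "mul (mul a b) b = sc (1/2) (mul a b) + sc m b"
    using L6[OF hb, of a] by (auto simp: mcomm[of b a])
  have Ta: "T a b = b - sc 4 (mul a b) + sc (8*l) a" by (rule Tab[OF Rl])
  have Tb: "T b a = a - sc 4 (mul a b) + sc (8*m) b"
    using Tab[of b a m] Rm by (simp add: mcomm[of b a])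
  define P where "P \<longleftrightarrow> mul a b = sc (- (3/8)) e + sc (1/2) a + sc (1/2) b"
  have c1: "a \<noteq> 0 \<and> b \<noteq> 0 \<and> l = 1/8 \<and> m = 1/8" if HP: P
  proof -
    have P1: "mul a b = sc (- (3/8)) e + sc (1/2) a + sc (1/2) b" using HP P_def by simp
    have P2: "mul b a = sc (- (3/8)) e + sc (1/2) b + sc (1/2) a"
      using P1 by (simp add: mcomm[of b a] add.assoc add.commute)
    have a0: "a \<noteq> 0" using nzP[OF P1 eb bb] ab by auto
    have b0: "b \<noteq> 0" using nzP[OF P2 ea aa] ab by auto
    have "l = 1/8" using lam_P[OF P1 ea aa a0 Rl] .
    moreover have "m = 1/8" using lam_P[OF P2 eb bb b0] Rm by (simp add: mcomm[of b a])
    ultimately show ?thesis using a0 b0 by simp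
  qed
  have c2: "a \<noteq> 0 \<and> b \<noteq> 0 \<and> l = 1/8 \<and> m = 1/8" if HT: "T b a = T a b"
  proof -
    have a0: "a \<noteq> 0"
    proof
      assume "a = 0"
      then have "b = 0" using HT by simp
      then show False using ab \<open>a = 0\<close> by simp
    qed
    have b0: "b \<noteq> 0"
    proof
      assume "b = 0"
      then have "a = 0" using HT by simp
      then show False using ab \<open>b = 0\<close> by simp
    qed
    have "sc (8*l - 1) a - sc (8*m - 1) b = T a b - T b a"
      unfolding Ta Tb by (simp add: algebra_simps)
    then have "sc (8*l - 1) a = sc (8*m - 1) b" using HT by simp
    then have "8*l - 1 = 0 \<and> 8*m - 1 = 0" using lin_dep_idem[OF aa bb a0 b0 ab] by blast
    then have "l = 1/8 \<and> m = 1/8" using nz by (simp add: field_simps)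
    then show ?thesis using a0 b0 by simp
  qed
  have c3: "e \<notin> span {a, b} \<and> a \<notin> span {b} \<and> b \<noteq> 0 \<and> M \<subseteq> span {e, a, b}
       \<and> mul (mul a b) a = sc (1/2) (mul a b) + sc (1/8) a
       \<and> mul (mul a b) b = sc (1/2) (mul a b) + sc (1/8) b"
    if a0: "a \<noteq> 0" and b0: "b \<noteq> 0" and l8: "l = 1/8" and m8: "m = 1/8"
  proof -
    have R1: "mul (mul a b) a = sc (1/2) (mul a b) + sc (1/8) a" using Rl l8 by simp
    have R2: "mul (mul a b) b = sc (1/2) (mul a b) + sc (1/8) b" using Rm m8 by simp
    note nn = indep[OF aa bb a0 b0 ab ea eb R1 R2]
    have ind: "independent {e, a, b}"
    proof -
      have "independent {b}" using b0 independent_empty by (intro independent_insertI) auto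
      then have "independent {a, b}" using nn(2) by (rule_tac independent_insertI)
      then show ?thesis using nn(1) by (rule_tac independent_insertI)
    qed
    have "e \<noteq> a" "e \<noteq> b" using nn(1) by (auto simp: span_base)
    then have card: "card {e, a, b} = 3" using ab by simp
    have "M \<subseteq> span {e, a, b}"
      using dim_span_le[of "{e, a, b}" M] eM aM bM card dimM ind by simp
    then show ?thesis using nn R1 R2 b0 by simp
  qed
  have eqv: "P \<longleftrightarrow> T b a = T a b"
  proof
    assume HP: P
    then have l8: "l = 1/8" and m8: "m = 1/8" using c1 by auto
    have "(8::'k) * (1/8) = 1" using nz by simp
    then show "T b a = T a b" unfolding Ta Tb l8 m8 by (simp add: algebra_simps)
  next
    assume HT: "T b a = T a b"
    then have h: "a \<noteq> 0" "b \<noteq> 0" "l = 1/8" "m = 1/8" using c2 by auto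
    note cc = c3[OF h]
    then have "mul a b \<in> span {e, a, b}" using abM by blast
    then obtain \<alpha> \<beta> \<gamma> where AB: "mul a b = sc \<alpha> e + sc \<beta> a + sc \<gamma> b" by (auto simp: span3)
    have "\<alpha> = - (3/8) \<and> \<beta> = 1/2 \<and> \<gamma> = 1/2"
      using cc by (intro solve_coeffs[OF aa bb ea eb _ _ _ _ _ AB]) auto
    then have q: "\<alpha> = - (3/8)" "\<beta> = 1/2" "\<gamma> = 1/2" by auto
    show P unfolding P_def AB q by (rule refl)
  qed
  have tau_eqv: "(tau sc mul b a = tau sc mul a b) \<longleftrightarrow> P" using eqv tau_a tau_b by simp
  moreover have "P \<longrightarrow> has_order (tau sc mul a \<circ> tau sc mul b) 3
          \<and> ((3::'k) \<noteq> 0 \<longrightarrow> is_identity_of mul (Nalg sc mul a b) e \<and> Nalg sc mul a b = M)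
          \<and> (half_axis sc mul (e - b) \<longrightarrow>
                vector_space.dim sc (Nalg sc mul a (e - b)) = 3
              \<and> mul a (e - b) = sc (- (1/8)) e + sc (1/2) a + sc (1/2) (e - b)
              \<and> ((3::'k) \<noteq> 0 \<longrightarrow> Nalg sc mul a (e - b) = Nalg sc mul a b)
              \<and> ((3::'k) = 0 \<longrightarrow> Nalg sc mul a b \<subset> Nalg sc mul a (e - b)))"
  proof
    assume HP: P
    have P1: "mul a b = sc (- (3/8)) e + sc (1/2) a + sc (1/2) b" using HP P_def by simp
    have HT: "T b a = T a b" using HP eqv by simp
    have h: "a \<noteq> 0" "b \<noteq> 0" "l = 1/8" "m = 1/8" using c1 HP by auto
    note cc = c3[OF h]
    have n1: "e \<notin> span {a, b}" and MS: "M \<subseteq> span {e, a, b}" using cc by auto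
    define f where "f = T a \<circ> T b"
    have conj: "\<And>x. T b (T a (T b x)) = T a (T b (T a x))"
      using T_conj[OF hb, of a] T_conj[OF ha, of b] HT by metis
    have f3: "f ^^ 3 = id"
    proof
      fix x
      have "(f ^^ 3) x = T a (T b (T a (T b (T a (T b x)))))"
        by (simp add: f_def numeral_3_eq_3)
      also have "T a (T b (T a (T b x))) = T b (T a (T b (T b x)))" using conj[of "T b x"] by simp
      also have "\<dots> = T b (T a x)" using T_invol[OF hb] by simp
      finally show "(f ^^ 3) x = id x" using T_invol[OF ha] T_invol[OF hb] by simp
    qed
    have f1: "f \<noteq> id"
    proof
      assume fid: "f = id"
      have eqT: "\<And>x. T b x = T a x"
      proof -
        fix x
        have "T a (T b x) = x" using fid by (metis comp_apply f_def id_apply)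
        then have "T a (T a (T b x)) = T a x" by simp
        then show "T b x = T a x" using T_invol[OF ha] by simp
      qed
      have "T a b = b" using eqT[of b] T_self[OF bb] by simp
      moreover have "T b a = a" using eqT[of a] T_self[OF aa] by simp
      ultimately show False using HT ab by simp
    qed
    have f2: "f ^^ 2 \<noteq> id"
    proof
      assume "f ^^ 2 = id"
      then have "f ^^ 3 = f" by (simp add: numeral_3_eq_3 numeral_2_eq_2 funpow_Suc_right del: funpow.simps)
      then show False using f1 f3 by simp
    qed
    have ord: "has_order (tau sc mul a \<circ> tau sc mul b) 3"
      unfolding has_order_def tau_a tau_b f_def[symmetric]
    proof (intro conjI allI impI)
      fix k :: nat assume "0 < k \<and> k < 3"
      then have "k = 1 \<or> k = 2" by auto
      then show "f ^^ k \<noteq> id" using f1 f2 by auto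
    qed (use f3 in auto)
    have spanS: "M \<subseteq> S" if "subspace S" "e \<in> S" "a \<in> S" "b \<in> S" for S
    proof -
      have "span {e, a, b} \<subseteq> S" using that by (intro span_minimal) auto
      then show ?thesis using MS by blast
    qed
    have id3: "(3::'k) \<noteq> 0 \<longrightarrow> is_identity_of mul (Nalg sc mul a b) e \<and> Nalg sc mul a b = M"
    proof
      assume n3: "(3::'k) \<noteq> 0"
      have eform: "e = sc (- (8/3)) (mul a b - sc (1/2) a - sc (1/2) b)"
      proof -
        have "mul a b - sc (1/2) a - sc (1/2) b = sc (- (3/8)) e" using P1 by simp
        moreover have "(3::'k) * 8 \<noteq> 0" using n3 nz by (simp only: mult_eq_0_iff) simp
        ultimately show ?thesis using n3 nz by simp
      qed
      have "M \<subseteq> Nalg sc mul a b"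
      proof
        fix x assume xM: "x \<in> M"
        show "x \<in> Nalg sc mul a b" unfolding Nalg_mem
        proof (intro allI impI)
          fix S assume S: "subalg sc mul S \<and> a \<in> S \<and> b \<in> S"
          then have Ss: "subspace S" by (simp add: subalg_iff)
          have "mul a b \<in> S" using S by (simp add: subalg_iff)
          then have "e \<in> S" using S Ss eform
            by (metis subspace_diff subspace_scale)
          then show "x \<in> S" using spanS[OF Ss] S xM by blast
        qed
      qed
      then have NeqM: "Nalg sc mul a b = M" using NM by blast
      then show "is_identity_of mul (Nalg sc mul a b) e \<and> Nalg sc mul a b = M"
        using e by simp
    qed
    have AC: "mul a (e - b) = sc (- (1/8)) e + sc (1/2) a + sc (1/2) (e - b)"
    proof -
      have ae: "mul a e = a" using ea by (simp add: mcomm[of a e])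
      have "mul a (e - b) = sc (3/8) e + (a - sc (1/2) a) - sc (1/2) b"
        by (simp add: mdiff ae P1 algebra_simps)
      also have "\<dots> = sc (3/8) e + sc (1/2) a - sc (1/2) b" by (simp add: half)
      also have "sc (3/8) e = sc (- (1/8)) e + sc (1/2) e" by (rule sc_comb[symmetric]) (use nz in \<open>simp add: field_simps\<close>)
      finally show ?thesis by (simp add: algebra_simps)
    qed
    have NC: "Nalg sc mul a (e - b) = M"
    proof
      show "Nalg sc mul a (e - b) \<subseteq> M" using M aM eM bM Msub by (intro Nalg_sub) (auto intro: subspace_diff)
      show "M \<subseteq> Nalg sc mul a (e - b)"
      proof
        fix x assume xM: "x \<in> M"
        show "x \<in> Nalg sc mul a (e - b)" unfolding Nalg_mem
        proof (intro allI impI)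
          fix S assume S: "subalg sc mul S \<and> a \<in> S \<and> e - b \<in> S"
          then have Ss: "subspace S" by (simp add: subalg_iff)
          have "mul a (e - b) \<in> S" using S by (simp add: subalg_iff)
          have eform: "e = sc 8 (sc (1/2) (e - b) - mul a (e - b) + sc (1/2) a)"
          proof -
            have "sc (1/2) (e - b) - mul a (e - b) + sc (1/2) a = sc (1/8) e"
              unfolding AC by (simp add: algebra_simps)
            then show ?thesis using nz by simp
          qed
          have t1: "sc (1/2) (e - b) \<in> S" using S Ss by (simp add: subspace_scale)
          have t2: "sc (1/2) (e - b) - mul a (e - b) \<in> S"
            using t1 Ss \<open>mul a (e - b) \<in> S\<close> by (rule_tac subspace_diff)
          have t3: "sc (1/2) a \<in> S" using S Ss by (simp add: subspace_scale)
          have t4: "sc 8 (sc (1/2) (e - b) - mul a (e - b) + sc (1/2) a) \<in> S"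
            using t2 t3 Ss by (simp add: subspace_scale subspace_add)
          have eS: "e \<in> S" by (subst eform) (rule t4)
          have "b = e - (e - b)" by simp
          then have bS: "b \<in> S" using eS S Ss by (metis subspace_diff)
          show "x \<in> S" using spanS[OF Ss eS] S bS xM by blast
        qed
      qed
    qed
    have ch3: "(3::'k) = 0 \<longrightarrow> Nalg sc mul a b \<subset> Nalg sc mul a (e - b)"
    proof
      assume z3: "(3::'k) = 0"
      have P0: "mul a b = sc (1/2) a + sc (1/2) b" using P1 z3 by simp
      have sub: "subalg sc mul (span {a, b})"
        unfolding subalg_iff
      proof (intro conjI ballI)
        show "subspace (span {a, b})" by simp
        fix x y assume x: "x \<in> span {a, b}" and y: "y \<in> span {a, b}"
        obtain p q where xe: "x = sc p a + sc q b" using x by (auto simp: span2)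
        obtain p' q' where ye: "y = sc p' a + sc q' b" using y by (auto simp: span2)
        have "mul x y = sc (p*p') a + sc (p*q') (mul a b) + sc (q*p') (mul a b) + sc (q*q') b"
          unfolding xe ye by (simp add: madd madd2 mscale mscale2 aa bb mcomm[of b a] algebra_simps)
        moreover have "mul a b \<in> span {a, b}" unfolding P0 by (simp add: span_add span_scale span_base)
        moreover have "a \<in> span {a, b}" "b \<in> span {a, b}" by (simp_all add: span_base)
        ultimately show "mul x y \<in> span {a, b}" by (simp add: span_add span_scale)
      qed
      have "Nalg sc mul a b \<subseteq> span {a, b}" using sub by (intro Nalg_sub) (simp_all add: span_base)
      then have "e \<notin> Nalg sc mul a b" using n1 by blast
      moreover have "e \<in> Nalg sc mul a (e - b)" using NC eM by simp
      ultimately show "Nalg sc mul a b \<subset> Nalg sc mul a (e - b)" using NM NC by blast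
    qed
    show "has_order (tau sc mul a \<circ> tau sc mul b) 3
          \<and> ((3::'k) \<noteq> 0 \<longrightarrow> is_identity_of mul (Nalg sc mul a b) e \<and> Nalg sc mul a b = M)
          \<and> (half_axis sc mul (e - b) \<longrightarrow>
                vector_space.dim sc (Nalg sc mul a (e - b)) = 3
              \<and> mul a (e - b) = sc (- (1/8)) e + sc (1/2) a + sc (1/2) (e - b)
              \<and> ((3::'k) \<noteq> 0 \<longrightarrow> Nalg sc mul a (e - b) = Nalg sc mul a b)
              \<and> ((3::'k) = 0 \<longrightarrow> Nalg sc mul a b \<subset> Nalg sc mul a (e - b)))"
      using ord id3 AC NC ch3 dimM by auto
  qed
  ultimately show ?thesis unfolding P_def by blast
qed

end
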